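(* Let $0<\varepsilon<1/7$ be a constant, $p\in(0,1)$, and $G\sim G(n,p)$. Let $H$ be a balanced graph on $m$ vertices ($m$ dividing $n$) with average degree $\alpha$, $2<\alpha<3$. If $m\le\min\!\left(\sqrt{\varepsilon/p},\,2^{-1/4}p^{\alpha/4}\sqrt{\varepsilon n}\right)$ (equivalently $\varepsilon\ge m^2p$ and $\varepsilon^2\ge 2\frac{m^4}{n^2p^{\alpha}}$), then for every $\beta\in[0,1)$, \[\Pr\big[X_H(G)\le\beta\,\mathbb E[X_H(G)]\big]\le\frac{4\varepsilon}{(1-\beta)^2}.\]
   Context: A graph with average degree $\alpha$ is balanced if every induced subgraph has average degree at most $\alpha$. $G(n,p)$ is the Erdős–Rényi random graph on $[n]$. With $H$ on vertex set $[m]$, partition $[n]$ into parts $P_i=\{(i-1)\frac nm+1,\dots,i\frac nm\}$, $1\le i\le m$. $X_H(G)$ is the number of sets $S=\{v_1,\dots,v_m\}$ with $v_i\in P_i$ for all $i$ such that $i\mapsto v_i$ is an isomorphism from $H$ onto the induced subgraph $G[S]$. *)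

theory Defs
  imports "HOL-Probability.Probability"
begin

text \<open>Graphs on a vertex set are given by their edge sets: sets of 2-element subsets.
  A graph on the vertex set V is thus a subset of \<open>pairs V\<close>.\<close>

definition pairs :: "nat set \<Rightarrow> nat set set" where
  "pairs V = {e. \<exists>u v. e = {u, v} \<and> u \<noteq> v \<and> u \<in> V \<and> v \<in> V}"

text \<open>Erdos-Renyi random graph G(n,p) on [n] = {1..n}: each potential edge present
  independently with probability p. A sample is the edge indicator function.\<close>

definition Gnp :: "nat \<Rightarrow> real \<Rightarrow> (nat set \<Rightarrow> bool) pmf" where
  "Gnp n p = Pi_pmf (pairs {1..n}) False (\<lambda>_. bernoulli_pmf p)"

definition avg_degree :: "nat set set \<Rightarrow> nat set \<Rightarrow> real" where
  "avg_degree E V = 2 * real (card E) / real (card V)"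

definition balanced :: "nat set set \<Rightarrow> nat set \<Rightarrow> bool" where
  "balanced E V \<longleftrightarrow>
     (\<forall>S. S \<subseteq> V \<and> S \<noteq> {} \<longrightarrow> avg_degree {e \<in> E. e \<subseteq> S} S \<le> avg_degree E V)"

definition part :: "nat \<Rightarrow> nat \<Rightarrow> nat \<Rightarrow> nat set" where
  "part n m i = {(i - 1) * (n div m) + 1 .. i * (n div m)}"

definition XH :: "nat \<Rightarrow> nat \<Rightarrow> nat set set \<Rightarrow> (nat set \<Rightarrow> bool) \<Rightarrow> nat" where
  "XH n m EH G = card {S. \<exists>v. (\<forall>i\<in>{1..m}. v i \<in> part n m i) \<and> S = v ` {1..m} \<and>
      inj_on v {1..m} \<and>
      (\<forall>i\<in>{1..m}. \<forall>j\<in>{1..m}. i \<noteq> j \<longrightarrow> ({i, j} \<in> EH \<longleftrightarrow> G {v i, v j}))}"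

end

theory Submission
  imports Defs
begin
lemma finite_pairs: "finite V \<Longrightarrow> finite (pairs V)"
proof -
  assume "finite V"
  have "pairs V \<subseteq> Pow V" unfolding pairs_def by auto
  thus ?thesis using \<open>finite V\<close> finite_subset by blast
qed

lemma cyl_prob:
  assumes p: "0 \<le> p" "p \<le> 1" and D: "D \<subseteq> pairs {1..n}"
  shows "measure_pmf.prob (Gnp n p) {G. \<forall>e\<in>D. G e = t e}
       = (\<Prod>e\<in>D. if t e then p else 1 - p)"
proof -
  let ?B = "\<lambda>e. if e \<in> D then {t e} else UNIV"
  have fin: "finite (pairs {1..n})" by (rule finite_pairs) simp
  have eq: "{G. \<forall>e\<in>D. G e = t e} = Pi (pairs {1..n}) ?B"
    using D by (auto simp: Pi_def)
  have "measure_pmf.prob (Gnp n p) {G. \<forall>e\<in>D. G e = t e}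
      = (\<Prod>e\<in>pairs {1..n}. measure_pmf.prob (bernoulli_pmf p) (?B e))"
    unfolding eq Gnp_def by (rule measure_Pi_pmf_Pi[OF fin])
  also have "\<dots> = (\<Prod>e\<in>pairs {1..n}. if e \<in> D then (if t e then p else 1 - p) else 1)"
    by (intro prod.cong refl) (use p in \<open>auto simp: measure_pmf_single\<close>)
  also have "\<dots> = (\<Prod>e\<in>D. if t e then p else 1 - p)"
    using D fin by (simp add: prod.If_cases Int_absorb1 Int_absorb2)
  finally show ?thesis .
qed

locale LC =
  fixes n m :: nat and EH :: "nat set set" and p :: real
  assumes mpos: "0 < m" and mdvd: "m dvd n" and npos: "0 < n"
    and p0: "0 < p" and p1: "p < 1" and EHsub: "EH \<subseteq> pairs {1..m}"
begin

definition "N = n div m"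
definition "idx x = (x - 1) div N + 1"
definition "V = PiE {1..m} (part n m)"
definition "D v = (\<lambda>e. v ` e) ` pairs {1..m}"
definition "T e = (idx ` e \<in> EH)"
definition "A v = {G. \<forall>e\<in>D v. G e = T e}"
definition "fb b = (if b then p else 1 - p)"
definition "I v w = {i\<in>{1..m}. v i = w i}"

lemma N_pos: "0 < N"
  using mpos mdvd npos unfolding N_def
  by (metis div_greater_zero_iff dvd_imp_le)

lemma n_eq: "n = N * m"
  using mdvd unfolding N_def by simp

lemma idx_part: assumes "i \<in> {1..m}" "x \<in> part n m i" shows "idx x = i"
proof -
  from assms have i: "1 \<le> i" and x: "(i - 1) * N + 1 \<le> x" "x \<le> i * N"
    unfolding part_def N_def by auto
  have "(x - 1) div N = i - 1"
  proof (rule div_nat_eqI)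
    show "N * (i - 1) \<le> x - 1" using x by (simp add: mult.commute)
    obtain i' where i': "i = Suc i'" using i by (cases i) auto
    have "i * N = (i - 1) * N + N" by (metis i' diff_Suc_1 mult_Suc add.commute)
    then show "x - 1 < N * Suc (i - 1)" using x N_pos by (simp add: mult.commute)
  qed
  then show ?thesis using i unfolding idx_def by simp
qed

lemma part_sub: "i \<in> {1..m} \<Longrightarrow> part n m i \<subseteq> {1..n}"
proof -
  assume i: "i \<in> {1..m}"
  have "i * N \<le> m * N" using i by simp
  then have "i * N \<le> n" using n_eq by (metis mult.commute)
  then show ?thesis unfolding part_def N_def[symmetric] by auto
qed

lemma card_part: assumes "1 \<le> i" shows "card (part n m i) = N"
proof -
  obtain i' where i': "i = Suc i'" using assms by (cases i) auto
  show ?thesis unfolding part_def N_def[symmetric] i' by simp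
qed

lemma finite_V: "finite V"
  unfolding V_def part_def by (intro finite_PiE) auto

lemma card_V: "card V = N ^ m"
proof -
  have "card V = (\<Prod>i\<in>{1..m}. card (part n m i))" unfolding V_def by (simp add: card_PiE)
  also have "\<dots> = (\<Prod>i\<in>{1..m}. N)" by (intro prod.cong refl) (simp add: card_part)
  finally show ?thesis by simp
qed

lemma V_idx: "v \<in> V \<Longrightarrow> i \<in> {1..m} \<Longrightarrow> idx (v i) = i"
  using idx_part[of i "v i"] by (auto simp: V_def PiE_iff)

lemma V_inj: "v \<in> V \<Longrightarrow> inj_on v {1..m}"
  by (metis V_idx inj_onI)

lemma pairs_sub_Pow: "pairs X \<subseteq> Pow X" unfolding pairs_def by auto

lemma D_sub: assumes v: "v \<in> V" shows "D v \<subseteq> pairs {1..n}"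
proof
  fix e assume "e \<in> D v"
  then obtain i j where ij: "i \<noteq> j" "i \<in> {1..m}" "j \<in> {1..m}" and e: "e = {v i, v j}"
    unfolding D_def pairs_def by auto
  have "v i \<noteq> v j" using V_idx[OF v] ij by metis
  moreover have "v i \<in> part n m i" "v j \<in> part n m j"
    using v ij unfolding V_def by (auto simp: PiE_iff)
  then have "v i \<in> {1..n}" "v j \<in> {1..n}" using part_sub ij by blast+
  ultimately show "e \<in> pairs {1..n}" unfolding pairs_def e by auto
qed

lemma finite_D: "v \<in> V \<Longrightarrow> finite (D v)"
  using D_sub finite_pairs finite_subset by (metis finite_atLeastAtMost)

lemma T_image: assumes v: "v \<in> V" and e: "e \<in> pairs {1..m}" shows "T (v ` e) = (e \<in> EH)"
proof -
  have "idx ` v ` e = e" using e V_idx[OF v] pairs_sub_Pow by (force simp: image_image)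
  then show ?thesis unfolding T_def by simp
qed

lemma inj_img: assumes v: "v \<in> V" shows "inj_on (\<lambda>e. v ` e) (pairs {1..m})"
  using V_inj[OF v] pairs_sub_Pow
  by (intro inj_onI) (metis Pow_iff inj_on_image_eq_iff subset_iff)

definition "q = (\<Prod>e\<in>pairs {1..m}. fb (e \<in> EH))"

lemma prob_A: assumes v: "v \<in> V" shows "measure_pmf.prob (Gnp n p) (A v) = q"
proof -
  have "measure_pmf.prob (Gnp n p) (A v) = (\<Prod>e\<in>D v. fb (T e))"
    unfolding A_def fb_def using cyl_prob[OF _ _ D_sub[OF v]] p0 p1 by simp
  also have "\<dots> = prod ((\<lambda>e. fb (T e)) \<circ> (\<lambda>e. v ` e)) (pairs {1..m})"
    unfolding D_def by (rule prod.reindex[OF inj_img[OF v]])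
  also have "\<dots> = (\<Prod>e\<in>pairs {1..m}. fb (T (v ` e)))" by (simp only: comp_def)
  also have "\<dots> = q" unfolding q_def using T_image[OF v] by simp
  finally show ?thesis .
qed

end

context LC begin

lemma cond_iff: assumes v: "v \<in> V"
  shows "(\<forall>i\<in>{1..m}. \<forall>j\<in>{1..m}. i \<noteq> j \<longrightarrow> ({i, j} \<in> EH \<longleftrightarrow> G {v i, v j})) \<longleftrightarrow> G \<in> A v"
proof
  assume H: "\<forall>i\<in>{1..m}. \<forall>j\<in>{1..m}. i \<noteq> j \<longrightarrow> ({i, j} \<in> EH \<longleftrightarrow> G {v i, v j})"
  show "G \<in> A v" unfolding A_def
  proof (intro CollectI ballI)
    fix e assume "e \<in> D v"
    then obtain e0 where e0: "e0 \<in> pairs {1..m}" "e = v ` e0" unfolding D_def by auto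
    then obtain i j where ij: "e0 = {i,j}" "i \<noteq> j" "i \<in> {1..m}" "j \<in> {1..m}" unfolding pairs_def by auto
    have "T e = (e0 \<in> EH)" using T_image[OF v e0(1)] e0(2) by simp
    have "({i,j} \<in> EH) = G {v i, v j}" using H ij by blast
    moreover have "e = {v i, v j}" using e0(2) ij(1) by simp
    ultimately show "G e = T e" using \<open>T e = (e0 \<in> EH)\<close> ij(1) by simp
  qed
next
  assume G: "G \<in> A v"
  show "\<forall>i\<in>{1..m}. \<forall>j\<in>{1..m}. i \<noteq> j \<longrightarrow> ({i, j} \<in> EH \<longleftrightarrow> G {v i, v j})"
  proof (intro ballI impI)
    fix i j assume ij: "i \<in> {1..m}" "j \<in> {1..m}" "i \<noteq> j"
    have e0: "{i,j} \<in> pairs {1..m}" using ij unfolding pairs_def by auto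
    have "v ` {i,j} \<in> D v" unfolding D_def using e0 by (rule imageI)
    then have "G (v ` {i,j}) = T (v ` {i,j})" using G unfolding A_def by auto
    then show "({i, j} \<in> EH \<longleftrightarrow> G {v i, v j})" using T_image[OF v e0] by simp
  qed
qed

lemma img_inj: "inj_on (\<lambda>v. v ` {1..m}) V"
proof (rule inj_onI)
  fix v w assume v: "v \<in> V" and w: "w \<in> V" and eq: "v ` {1..m} = w ` {1..m}"
  show "v = w"
  proof (rule extensionalityI)
    show "v \<in> extensional {1..m}" "w \<in> extensional {1..m}" using v w unfolding V_def PiE_def by auto
    fix i assume i: "i \<in> {1..m}"
    then have "v i \<in> w ` {1..m}" using eq by auto
    then obtain j where j: "j \<in> {1..m}" "v i = w j" by auto
    have "i = j" using V_idx[OF v i] V_idx[OF w j(1)] j(2) by simp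
    then show "v i = w i" using j by simp
  qed
qed

lemma XH_eq: "XH n m EH G = card {v\<in>V. G \<in> A v}"
proof -
  have "{S. \<exists>v. (\<forall>i\<in>{1..m}. v i \<in> part n m i) \<and> S = v ` {1..m} \<and>
      inj_on v {1..m} \<and>
      (\<forall>i\<in>{1..m}. \<forall>j\<in>{1..m}. i \<noteq> j \<longrightarrow> ({i, j} \<in> EH \<longleftrightarrow> G {v i, v j}))}
      = (\<lambda>v. v ` {1..m}) ` {v\<in>V. G \<in> A v}" (is "?L = ?R")
  proof
    show "?L \<subseteq> ?R"
    proof
      fix S assume "S \<in> ?L"
      then obtain v where v: "\<forall>i\<in>{1..m}. v i \<in> part n m i" "S = v ` {1..m}"
        "\<forall>i\<in>{1..m}. \<forall>j\<in>{1..m}. i \<noteq> j \<longrightarrow> ({i, j} \<in> EH \<longleftrightarrow> G {v i, v j})" by blast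
      let ?w = "restrict v {1..m}"
      have w: "?w \<in> V" using v(1) unfolding V_def by auto
      have "\<forall>i\<in>{1..m}. \<forall>j\<in>{1..m}. i \<noteq> j \<longrightarrow> ({i, j} \<in> EH \<longleftrightarrow> G {?w i, ?w j})"
        using v(3) by simp
      then have "G \<in> A ?w" using cond_iff[OF w] by blast
      moreover have "S = ?w ` {1..m}" using v(2) by auto
      ultimately show "S \<in> ?R" using w by blast
    qed
  next
    show "?R \<subseteq> ?L"
    proof
      fix S assume "S \<in> ?R"
      then obtain v where v: "v \<in> V" "G \<in> A v" "S = v ` {1..m}" by blast
      have "\<forall>i\<in>{1..m}. v i \<in> part n m i" using v(1) unfolding V_def by auto
      moreover have "\<forall>i\<in>{1..m}. \<forall>j\<in>{1..m}. i \<noteq> j \<longrightarrow> ({i, j} \<in> EH \<longleftrightarrow> G {v i, v j})"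
        using cond_iff[OF v(1)] v(2) by simp
      ultimately show "S \<in> ?L" using v(3) V_inj[OF v(1)] by (intro CollectI exI[of _ v]) simp
    qed
  qed
  moreover have inj: "inj_on (\<lambda>v. v ` {1..m}) {v\<in>V. G \<in> A v}"
    by (rule inj_on_subset[OF img_inj]) auto
  have "card ((\<lambda>v. v ` {1..m}) ` {v\<in>V. G \<in> A v}) = card {v\<in>V. G \<in> A v}"
    by (rule card_image[OF inj])
  ultimately show ?thesis unfolding XH_def by simp
qed

lemma cylA: assumes v: "v \<in> V" shows "measure_pmf.prob (Gnp n p) (A v) = (\<Prod>e\<in>D v. fb (T e))"
proof -
  have "measure_pmf.prob (Gnp n p) (A v) = (\<Prod>e\<in>D v. if T e then p else 1 - p)"
    unfolding A_def by (rule cyl_prob) (use p0 p1 D_sub[OF v] in auto)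
  then show ?thesis unfolding fb_def .
qed

lemma prob_inter: assumes v: "v \<in> V" and w: "w \<in> V"
  shows "measure_pmf.prob (Gnp n p) (A v \<inter> A w) * (\<Prod>e\<in>D v \<inter> D w. fb (T e)) = q * q"
proof -
  have fv: "finite (D v)" and fw: "finite (D w)" using finite_D v w by auto
  have "A v \<inter> A w = {G. \<forall>e\<in>D v \<union> D w. G e = T e}" unfolding A_def by auto
  moreover have "measure_pmf.prob (Gnp n p) {G. \<forall>e\<in>D v \<union> D w. G e = T e} = (\<Prod>e\<in>D v \<union> D w. if T e then p else 1 - p)"
    by (rule cyl_prob) (use p0 p1 D_sub[OF v] D_sub[OF w] in auto)
  ultimately have "measure_pmf.prob (Gnp n p) (A v \<inter> A w) = (\<Prod>e\<in>D v \<union> D w. fb (T e))"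
    unfolding fb_def by simp
  also have "D v \<union> D w = D v \<union> (D w - D v)" by blast
  also have "(\<Prod>e\<in>D v \<union> (D w - D v). fb (T e)) = (\<Prod>e\<in>D v. fb (T e)) * (\<Prod>e\<in>D w - D v. fb (T e))"
    by (rule prod.union_disjoint) (use fv fw in auto)
  finally have 1: "measure_pmf.prob (Gnp n p) (A v \<inter> A w) = (\<Prod>e\<in>D v. fb (T e)) * (\<Prod>e\<in>D w - D v. fb (T e))" .
  have qv: "(\<Prod>e\<in>D v. fb (T e)) = q" using prob_A[OF v] cylA[OF v] by simp
  have qw: "(\<Prod>e\<in>D w. fb (T e)) = q" using prob_A[OF w] cylA[OF w] by simp
  have "(\<Prod>e\<in>D w. fb (T e)) = (\<Prod>e\<in>D w - (D v \<inter> D w). fb (T e)) * (\<Prod>e\<in>D v \<inter> D w. fb (T e))"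
    by (rule prod.subset_diff) (use fw in auto)
  also have "D w - (D v \<inter> D w) = D w - D v" by blast
  finally have 2: "q = (\<Prod>e\<in>D w - D v. fb (T e)) * (\<Prod>e\<in>D v \<inter> D w. fb (T e))" using qw by simp
  show ?thesis unfolding 1 qv 2 by (simp add: mult.assoc)
qed

lemma DD: assumes v: "v \<in> V" and w: "w \<in> V"
  shows "D v \<inter> D w \<subseteq> (\<lambda>e. v ` e) ` pairs (I v w)"
proof
  fix e assume e: "e \<in> D v \<inter> D w"
  then obtain e1 e2 where e1: "e1 \<in> pairs {1..m}" "e = v ` e1" and e2: "e2 \<in> pairs {1..m}" "e = w ` e2"
    unfolding D_def by auto
  obtain i j where ij: "e1 = {i,j}" "i \<noteq> j" "i \<in> {1..m}" "j \<in> {1..m}" using e1 unfolding pairs_def by auto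
  obtain k l where kl: "e2 = {k,l}" "k \<noteq> l" "k \<in> {1..m}" "l \<in> {1..m}" using e2 unfolding pairs_def by auto
  have eq: "{v i, v j} = {w k, w l}" using e1 e2 ij kl by simp
  have vi: "v i = w i"
  proof -
    have "v i = w k \<or> v i = w l" using eq by blast
    then show ?thesis using V_idx[OF v ij(3)] V_idx[OF w kl(3)] V_idx[OF w kl(4)] by metis
  qed
  have vj: "v j = w j"
  proof -
    have "v j = w k \<or> v j = w l" using eq by blast
    then show ?thesis using V_idx[OF v ij(4)] V_idx[OF w kl(3)] V_idx[OF w kl(4)] by metis
  qed
  have "{i,j} \<in> pairs (I v w)" using ij vi vj unfolding pairs_def I_def by auto
  moreover have "e = v ` {i,j}" using e1 ij by simp
  ultimately show "e \<in> (\<lambda>e. v ` e) ` pairs (I v w)" by (simp only: imageI)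
qed

lemma card_I: assumes v: "v \<in> V" and w: "w \<in> V" and ne: "D v \<inter> D w \<noteq> {}"
  shows "2 \<le> card (I v w)"
proof -
  obtain e where "e \<in> pairs (I v w)" using DD[OF v w] ne by blast
  then obtain i j where ij: "i \<noteq> j" "i \<in> I v w" "j \<in> I v w" unfolding pairs_def by auto
  have "finite (I v w)" unfolding I_def by simp
  then have "card {i,j} \<le> card (I v w)" using ij by (intro card_mono) auto
  then show ?thesis using ij by simp
qed

end

context LC begin

lemma fb_pos: "0 < fb b" and fb_le1: "fb b \<le> 1"
  using p0 p1 unfolding fb_def by auto

lemma pairs_mono: "X \<subseteq> Y \<Longrightarrow> pairs X \<subseteq> pairs Y"
  unfolding pairs_def by blast

lemma card_pairs_le: "card (pairs {1..m}) \<le> m * m"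
proof -
  have "pairs {1..m} \<subseteq> (\<lambda>(i,j). {i,j}) ` ({1..m} \<times> {1..m})"
    unfolding pairs_def by auto
  then have "card (pairs {1..m}) \<le> card ((\<lambda>(i,j). {i,j}) ` ({1..m} \<times> {1..m}))"
    by (intro card_mono) auto
  also have "\<dots> \<le> card ({1..m} \<times> {1..m})" by (rule card_image_le) auto
  finally show ?thesis by simp
qed

lemma I_sub: "I v w \<subseteq> {1..m}" unfolding I_def by auto

lemma L_lower: assumes v: "v \<in> V" and w: "w \<in> V"
  shows "p ^ card {e\<in>EH. e \<subseteq> I v w} * (1 - p) ^ (m * m) \<le> (\<Prod>e\<in>D v \<inter> D w. fb (T e))"
proof -
  let ?P = "(\<lambda>e. v ` e) ` pairs (I v w)"
  have sub: "pairs (I v w) \<subseteq> pairs {1..m}" by (rule pairs_mono[OF I_sub])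
  have finP: "finite (pairs (I v w))" by (rule finite_subset[OF sub finite_pairs]) simp
  have fin: "finite ?P" using finP by simp
  have "(\<Prod>e\<in>?P. fb (T e)) = (\<Prod>e\<in>?P - (D v \<inter> D w). fb (T e)) * (\<Prod>e\<in>D v \<inter> D w. fb (T e))"
    by (rule prod.subset_diff[OF DD[OF v w] fin])
  also have "\<dots> \<le> 1 * (\<Prod>e\<in>D v \<inter> D w. fb (T e))"
    by (intro mult_right_mono prod_le_1 prod_nonneg) (auto intro: less_imp_le[OF fb_pos] fb_le1)
  finally have 1: "(\<Prod>e\<in>?P. fb (T e)) \<le> (\<Prod>e\<in>D v \<inter> D w. fb (T e))" by simp
  have inj: "inj_on (\<lambda>e. v ` e) (pairs (I v w))" by (rule inj_on_subset[OF inj_img[OF v] sub])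
  have "(\<Prod>e\<in>?P. fb (T e)) = prod ((\<lambda>e. fb (T e)) \<circ> (\<lambda>e. v ` e)) (pairs (I v w))"
    by (rule prod.reindex[OF inj])
  also have "\<dots> = (\<Prod>e\<in>pairs (I v w). if e \<in> EH then p else 1 - p)"
    by (intro prod.cong refl) (use T_image[OF v] sub in \<open>auto simp: fb_def\<close>)
  also have "\<dots> = (\<Prod>e\<in>pairs (I v w) \<inter> {e. e \<in> EH}. p) * (\<Prod>e\<in>pairs (I v w) \<inter> - {e. e \<in> EH}. 1 - p)"
    by (rule prod.If_cases[OF finP])
  also have "\<dots> = p ^ card (pairs (I v w) \<inter> {e. e \<in> EH}) * (1 - p) ^ card (pairs (I v w) \<inter> - {e. e \<in> EH})"
    by simp
  also have "pairs (I v w) \<inter> {e. e \<in> EH} = {e\<in>EH. e \<subseteq> I v w}"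
  proof (rule set_eqI)
    fix e
    show "e \<in> pairs (I v w) \<inter> {e. e \<in> EH} \<longleftrightarrow> e \<in> {e\<in>EH. e \<subseteq> I v w}"
    proof
      assume "e \<in> pairs (I v w) \<inter> {e. e \<in> EH}"
      then show "e \<in> {e\<in>EH. e \<subseteq> I v w}" using pairs_sub_Pow[of "I v w"] by auto
    next
      assume e: "e \<in> {e\<in>EH. e \<subseteq> I v w}"
      then have "e \<in> pairs {1..m}" using EHsub by auto
      then obtain a b where "e = {a, b}" "a \<noteq> b" unfolding pairs_def by auto
      then show "e \<in> pairs (I v w) \<inter> {e. e \<in> EH}" using e unfolding pairs_def by auto
    qed
  qed
  finally have 2: "(\<Prod>e\<in>?P. fb (T e)) = p ^ card {e\<in>EH. e \<subseteq> I v w} * (1 - p) ^ card (pairs (I v w) \<inter> - {e. e \<in> EH})" .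
  have "card (pairs (I v w) \<inter> - {e. e \<in> EH}) \<le> card (pairs {1..m})"
    by (intro card_mono) (use sub finite_pairs in auto)
  also have "\<dots> \<le> m * m" by (rule card_pairs_le)
  finally have "(1 - p) ^ (m * m) \<le> (1 - p) ^ card (pairs (I v w) \<inter> - {e. e \<in> EH})"
    by (intro power_decreasing) (use p0 p1 in auto)
  then have "p ^ card {e\<in>EH. e \<subseteq> I v w} * (1 - p) ^ (m * m) \<le> (\<Prod>e\<in>?P. fb (T e))"
    unfolding 2 by (intro mult_left_mono) (use p0 in auto)
  then show ?thesis using 1 by linarith
qed

end

context LC begin
lemma count_pairs: assumes J: "J \<subseteq> {1..m}"
  shows "card {(v, w). v \<in> V \<and> w \<in> V \<and> J \<subseteq> I v w} = N ^ m * N ^ (m - card J)"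
proof -
  define W where "W v = {w\<in>V. \<forall>i\<in>J. w i = v i}" for v
  have eq: "{(v, w). v \<in> V \<and> w \<in> V \<and> J \<subseteq> I v w} = Sigma V W"
    unfolding W_def I_def using J by auto
  have W: "W v = PiE {1..m} (\<lambda>i. if i \<in> J then {v i} else part n m i)" if v: "v \<in> V" for v
  proof -
    have "\<forall>i\<in>J. v i \<in> part n m i" using v J unfolding V_def by auto
    then have vJ: "\<And>i. i \<in> J \<Longrightarrow> v i \<in> part n m i" by blast
    show ?thesis
    proof (rule set_eqI, rule iffI)
      fix x assume "x \<in> W v"
      then have x: "x \<in> PiE {1..m} (part n m)" "\<forall>i\<in>J. x i = v i" unfolding W_def V_def by auto
      show "x \<in> PiE {1..m} (\<lambda>i. if i \<in> J then {v i} else part n m i)"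
      proof (rule PiE_I)
        fix i assume "i \<in> {1..m}" then show "x i \<in> (if i \<in> J then {v i} else part n m i)"
          using x by (auto simp: PiE_iff)
      next
        fix i assume "i \<notin> {1..m}" then show "x i = undefined" using x(1) by (rule PiE_arb[rotated])
      qed
    next
      fix x assume x: "x \<in> PiE {1..m} (\<lambda>i. if i \<in> J then {v i} else part n m i)"
      have "x \<in> PiE {1..m} (part n m)"
      proof (rule PiE_I)
        fix i assume i: "i \<in> {1..m}" then have "x i \<in> (if i \<in> J then {v i} else part n m i)"
          using x by (auto simp: PiE_iff)
        then show "x i \<in> part n m i" using vJ by (cases "i \<in> J") auto
      next
        fix i assume "i \<notin> {1..m}" then show "x i = undefined" using x by (rule PiE_arb[rotated])
      qed
      moreover have "\<forall>i\<in>J. x i = v i"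
      proof
        fix i assume i: "i \<in> J"
        then have "i \<in> {1..m}" using J by auto
        then have "x i \<in> (if i \<in> J then {v i} else part n m i)" by (rule PiE_mem[OF x])
        then show "x i = v i" using i by simp
      qed
      ultimately show "x \<in> W v" unfolding W_def V_def by auto
    qed
  qed
  have cW: "card (W v) = N ^ (m - card J)" if v: "v \<in> V" for v
  proof -
    have "card (W v) = (\<Prod>i\<in>{1..m}. card (if i \<in> J then {v i} else part n m i))"
      unfolding W[OF v] by (rule card_PiE) auto
    also have "\<dots> = (\<Prod>i\<in>{1..m}. if i \<in> J then 1 else N)"
      by (intro prod.cong refl) (auto simp: card_part)
    also have "\<dots> = (\<Prod>i\<in>{1..m} \<inter> {i. i \<in> J}. 1) * (\<Prod>i\<in>{1..m} \<inter> - {i. i \<in> J}. N)"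
      by (rule prod.If_cases) simp
    also have "\<dots> = N ^ card ({1..m} \<inter> - {i. i \<in> J})" by simp
    also have "{1..m} \<inter> - {i. i \<in> J} = {1..m} - J" by auto
    also have "card ({1..m} - J) = m - card J" using J by (simp add: card_Diff_subset finite_subset)
    finally show ?thesis .
  qed
  have "card (Sigma V W) = (\<Sum>v\<in>V. card (W v))"
    by (rule card_SigmaI) (use finite_V in \<open>auto simp: W_def\<close>)
  also have "\<dots> = (\<Sum>v\<in>V. N ^ (m - card J))" by (intro sum.cong refl cW)
  also have "\<dots> = N ^ m * N ^ (m - card J)" by (simp add: card_V)
  finally show ?thesis unfolding eq .
qed

end

context LC begin

definition "X G = real (card {v\<in>V. G \<in> A v})"

lemma finite_Gnp: "finite (set_pmf (Gnp n p))"
  unfolding Gnp_def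
  by (subst set_Pi_pmf) (auto intro!: finite_PiE_dflt intro: finite_pairs)

lemma integrable_Gnp: "integrable (measure_pmf (Gnp n p)) (f :: _ \<Rightarrow> real)"
  by (rule integrable_measure_pmf_finite[OF finite_Gnp])

lemma X_sum: "X G = (\<Sum>v\<in>V. indicator (A v) G)"
proof -
  have "(\<Sum>v\<in>V. indicator (A v) G :: real) = real (card {v\<in>V. G \<in> A v})"
    by (simp add: indicator_def sum.If_cases finite_V Int_def)
  then show ?thesis unfolding X_def by simp
qed

lemma X2_sum: "(X G)^2 = (\<Sum>x\<in>V \<times> V. indicator (A (fst x) \<inter> A (snd x)) G)"
proof -
  have "(X G)^2 = (\<Sum>v\<in>V. indicator (A v) G) * (\<Sum>w\<in>V. indicator (A w) G)"
    unfolding X_sum power2_eq_square ..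
  also have "\<dots> = (\<Sum>v\<in>V. \<Sum>w\<in>V. indicator (A v) G * indicator (A w) G)"
    by (simp add: sum_product)
  also have "\<dots> = (\<Sum>x\<in>V \<times> V. indicator (A (fst x)) G * indicator (A (snd x)) G)"
    by (simp add: sum.cartesian_product case_prod_beta)
  also have "\<dots> = (\<Sum>x\<in>V \<times> V. indicator (A (fst x) \<inter> A (snd x)) G)"
    by (simp add: indicator_inter_arith)
  finally show ?thesis .
qed

lemma EX: "measure_pmf.expectation (Gnp n p) X = real (card V) * q"
proof -
  have "X = (\<lambda>G. \<Sum>v\<in>V. indicator (A v) G)" by (rule ext) (rule X_sum)
  then have "measure_pmf.expectation (Gnp n p) X = measure_pmf.expectation (Gnp n p) (\<lambda>G. \<Sum>v\<in>V. indicator (A v) G)"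
    by simp
  also have "\<dots> = (\<Sum>v\<in>V. measure_pmf.expectation (Gnp n p) (indicator (A v)))"
    by (simp add: integrable_Gnp)
  also have "\<dots> = (\<Sum>v\<in>V. q)" by (intro sum.cong refl) (simp add: prob_A)
  finally show ?thesis by simp
qed

lemma EX2: "measure_pmf.expectation (Gnp n p) (\<lambda>G. (X G)^2) =
   (\<Sum>x\<in>V \<times> V. measure_pmf.prob (Gnp n p) (A (fst x) \<inter> A (snd x)))"
proof -
  have "measure_pmf.expectation (Gnp n p) (\<lambda>G. (X G)^2) = measure_pmf.expectation (Gnp n p) (\<lambda>G. \<Sum>x\<in>V \<times> V. indicator (A (fst x) \<inter> A (snd x)) G)"
    by (simp add: X2_sum)
  also have "\<dots> = (\<Sum>x\<in>V \<times> V. measure_pmf.expectation (Gnp n p) (indicator (A (fst x) \<inter> A (snd x))))"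
    by (simp add: integrable_Gnp)
  also have "\<dots> = (\<Sum>x\<in>V \<times> V. measure_pmf.prob (Gnp n p) (A (fst x) \<inter> A (snd x)))" by simp
  finally show ?thesis .
qed

lemma Var_eq: "measure_pmf.variance (Gnp n p) X =
   (\<Sum>x\<in>V \<times> V. measure_pmf.prob (Gnp n p) (A (fst x) \<inter> A (snd x)) - q * q)"
proof -
  have "measure_pmf.variance (Gnp n p) X = measure_pmf.expectation (Gnp n p) (\<lambda>G. (X G)^2) - (measure_pmf.expectation (Gnp n p) X)^2"
    by (rule measure_pmf.variance_eq) (rule integrable_Gnp)+
  also have "\<dots> = (\<Sum>x\<in>V \<times> V. measure_pmf.prob (Gnp n p) (A (fst x) \<inter> A (snd x))) - (\<Sum>x\<in>V \<times> V. q * q)"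
    unfolding EX2 EX by (simp add: card_cartesian_product power2_eq_square)
  finally show ?thesis by (simp add: sum_subtractf)
qed

end

lemma geom_bound:
  fixes x :: real assumes x: "0 \<le> x" "x \<le> 1/2"
  shows "(\<Sum>k=2..m. x ^ k) \<le> 2 * x^2"
proof (induction m)
  case 0 then show ?case using x by simp
next
  case (Suc m)
  show ?case
  proof (cases "Suc m < 2")
    case True then show ?thesis using x by simp
  next
    case False
    have "(\<Sum>k=2..Suc m. x ^ k) = x^2 * (\<Sum>k=0..Suc m - 2. x ^ k)"
    proof -
      have e: "{2..Suc m} = {0 + 2..(Suc m - 2) + 2}" using False by simp
      have "(\<Sum>k=2..Suc m. x ^ k) = (\<Sum>k=0..Suc m - 2. x ^ (k + 2))"
        unfolding e by (rule sum.shift_bounds_cl_nat_ivl)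
      also have "\<dots> = x^2 * (\<Sum>k=0..Suc m - 2. x ^ k)"
        by (simp add: sum_distrib_left power_add power2_eq_square mult_ac)
      finally show ?thesis .
    qed
    also have "(\<Sum>k=0..Suc m - 2. x ^ k) \<le> 2"
    proof -
      have "(\<Sum>k=0..Suc m - 2. x ^ k) = (\<Sum>k<Suc (Suc m - 2). x ^ k)"
        by (simp add: atLeast0AtMost lessThan_Suc_atMost)
      also have "\<dots> = (1 - x ^ Suc (Suc m - 2)) / (1 - x)"
        using x by (subst sum_gp_strict) auto
      also have "\<dots> \<le> 1 / (1 - x)"
        using x by (intro divide_right_mono) auto
      also have "\<dots> \<le> 2" using x by (simp add: field_simps)
      finally show ?thesis .
    qed
    then have "x^2 * (\<Sum>k=0..Suc m - 2. x ^ k) \<le> x^2 * 2"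
      by (intro mult_left_mono) auto
    finally show ?thesis by simp
  qed
qed

lemma subsets_sum:
  fixes y :: real
  assumes A: "finite A" and y: "0 \<le> y" "real (card A) * y \<le> 1/2"
  shows "(\<Sum>J\<in>{J. J \<subseteq> A \<and> 2 \<le> card J}. y ^ card J) \<le> 2 * (real (card A) * y)^2"
proof -
  let ?S = "{J. J \<subseteq> A \<and> 2 \<le> card J}"
  have finS: "finite ?S" by (rule finite_subset[of _ "Pow A"]) (use A in auto)
  have "(\<Sum>J\<in>?S. y ^ card J) = (\<Sum>k\<in>{2..card A}. \<Sum>J\<in>{J. J \<in> ?S \<and> card J = k}. y ^ card J)"
    by (rule sum.group[symmetric]) (use finS A in \<open>auto intro: card_mono\<close>)
  also have "\<dots> = (\<Sum>k\<in>{2..card A}. real (card A choose k) * y ^ k)"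
  proof (intro sum.cong refl)
    fix k assume k: "k \<in> {2..card A}"
    have "{J. J \<in> ?S \<and> card J = k} = {J. J \<subseteq> A \<and> card J = k}" using k by auto
    then show "(\<Sum>J\<in>{J. J \<in> ?S \<and> card J = k}. y ^ card J) = real (card A choose k) * y ^ k"
      using n_subsets[OF A, of k] by simp
  qed
  also have "\<dots> \<le> (\<Sum>k\<in>{2..card A}. (real (card A) * y) ^ k)"
  proof (intro sum_mono)
    fix k assume k: "k \<in> {2..card A}"
    have "real (card A choose k) \<le> real (card A) ^ k"
      using binomial_le_pow[of k "card A"] k by (metis atLeastAtMost_iff of_nat_le_iff of_nat_power)
    then show "real (card A choose k) * y ^ k \<le> (real (card A) * y) ^ k"
      unfolding power_mult_distrib using y by (intro mult_right_mono) auto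
  qed
  also have "\<dots> \<le> 2 * (real (card A) * y)^2"
    by (rule geom_bound) (use y in auto)
  finally show ?thesis .
qed

context LC begin

definition "JJ = {J. J \<subseteq> {1..m} \<and> 2 \<le> card J}"

lemma finite_JJ: "finite JJ"
  unfolding JJ_def by (rule finite_subset[of _ "Pow {1..m}"]) auto

lemma q_pos: "0 < q"
  unfolding q_def by (intro prod_pos) (auto intro: fb_pos)

lemma term_bound:
  fixes \<alpha> :: real
  assumes v: "v \<in> V" and w: "w \<in> V" and a0: "0 < \<alpha>"
    and bal: "\<And>J. J \<subseteq> {1..m} \<Longrightarrow> J \<noteq> {} \<Longrightarrow> 2 * real (card {e\<in>EH. e \<subseteq> J}) \<le> \<alpha> * real (card J)"
    and mp: "real (m * m) * p \<le> 1/7"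
  shows "measure_pmf.prob (Gnp n p) (A v \<inter> A w) - q * q
     \<le> 7/6 * (q * q) * (\<Sum>J\<in>{J. J \<in> JJ \<and> J \<subseteq> I v w}. (p powr (-\<alpha>/2)) ^ card J)"
proof -
  let ?S = "{J. J \<in> JJ \<and> J \<subseteq> I v w}"
  let ?L = "\<Prod>e\<in>D v \<inter> D w. fb (T e)"
  let ?P = "measure_pmf.prob (Gnp n p) (A v \<inter> A w)"
  have finS: "finite ?S" using finite_JJ by auto
  have nn: "0 \<le> (\<Sum>J\<in>?S. (p powr (-\<alpha>/2)) ^ card J)" by (intro sum_nonneg) auto
  have PL: "?P * ?L = q * q" by (rule prob_inter[OF v w])
  show ?thesis
  proof (cases "D v \<inter> D w = {}")
    case True
    then have "?P = q * q" using PL by simp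
    then show ?thesis using nn q_pos by simp
  next
    case False
    define k where "k = card (I v w)"
    have k2: "2 \<le> k" unfolding k_def by (rule card_I[OF v w False])
    have Ine: "I v w \<noteq> {}" using k2 unfolding k_def by auto
    define a where "a = card {e\<in>EH. e \<subseteq> I v w}"
    have a_le: "real a \<le> \<alpha> * real k / 2" using bal[OF I_sub Ine] unfolding a_def k_def by simp
    have pa: "p powr (\<alpha> * real k / 2) \<le> p ^ a"
      using powr_mono'[OF a_le, of p] p0 p1 by (simp add: powr_realpow)
    have "1 + real (m * m) * (- p) \<le> (1 + (- p)) ^ (m * m)"
      by (rule Bernoulli_inequality) (use p1 in simp)
    then have b: "6/7 \<le> (1 - p) ^ (m * m)" using mp by simp
    have "p powr (\<alpha> * real k / 2) * (6/7) \<le> p ^ a * (1 - p) ^ (m * m)"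
      by (intro mult_mono pa b) (use p0 p1 in auto)
    also have "\<dots> \<le> ?L" unfolding a_def by (rule L_lower[OF v w])
    finally have Lb: "p powr (\<alpha> * real k / 2) * (6/7) \<le> ?L" .
    have Lpos: "0 < p powr (\<alpha> * real k / 2) * (6/7)" using p0 by simp
    have Lp: "0 < ?L" using Lpos Lb by linarith
    have "?P = q * q / ?L" using PL Lp by (simp add: field_simps)
    also have "\<dots> \<le> q * q / (p powr (\<alpha> * real k / 2) * (6/7))"
      by (intro divide_left_mono Lb mult_pos_pos Lpos Lp) (use q_pos in auto)
    also have "\<dots> = 7/6 * (q * q) * (p powr (-\<alpha>/2)) ^ k"
    proof -
      have "(p powr (-\<alpha>/2)) ^ k = p powr (real k * (-\<alpha>/2))" using p0 by (simp add: powr_power)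
      also have "\<dots> = inverse (p powr (\<alpha> * real k / 2))"
        by (subst powr_minus[symmetric]) (simp add: algebra_simps)
      finally show ?thesis using p0 by (simp add: field_simps)
    qed
    also have "(p powr (-\<alpha>/2)) ^ k \<le> (\<Sum>J\<in>?S. (p powr (-\<alpha>/2)) ^ card J)"
    proof -
      have "I v w \<in> ?S" using k2 I_sub unfolding JJ_def k_def by auto
      then show ?thesis unfolding k_def by (intro member_le_sum finS) auto
    qed
    then have "7/6 * (q * q) * (p powr (-\<alpha>/2)) ^ k \<le> 7/6 * (q * q) * (\<Sum>J\<in>?S. (p powr (-\<alpha>/2)) ^ card J)"
      by (intro mult_left_mono) (use q_pos in auto)
    finally have "?P \<le> 7/6 * (q * q) * (\<Sum>J\<in>?S. (p powr (-\<alpha>/2)) ^ card J)" .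
    moreover have "0 \<le> q * q" using q_pos by simp
    ultimately show ?thesis by linarith
  qed
qed

end

context LC begin

lemma var_bound:
  fixes \<alpha> :: real
  assumes a0: "0 < \<alpha>"
    and bal: "\<And>J. J \<subseteq> {1..m} \<Longrightarrow> J \<noteq> {} \<Longrightarrow> 2 * real (card {e\<in>EH. e \<subseteq> J}) \<le> \<alpha> * real (card J)"
    and mp: "real (m * m) * p \<le> 1/7"
    and xb: "real m * (p powr (-\<alpha>/2) / real N) \<le> 1/2"
  shows "measure_pmf.variance (Gnp n p) X \<le> 7/3 * (real (card V) * q)^2 * (real m * (p powr (-\<alpha>/2) / real N))^2"
proof -
  define r where "r = p powr (-\<alpha>/2)"
  define y where "y = r / real N"
  have r0: "0 < r" unfolding r_def using p0 by simp
  have Np: "0 < real N" using N_pos by simp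
  have y0: "0 \<le> y" unfolding y_def using r0 Np by simp
  have finVV: "finite (V \<times> V)" using finite_V by simp
  have "measure_pmf.variance (Gnp n p) X =
      (\<Sum>x\<in>V \<times> V. measure_pmf.prob (Gnp n p) (A (fst x) \<inter> A (snd x)) - q * q)" by (rule Var_eq)
  also have "\<dots> \<le> (\<Sum>x\<in>V \<times> V. 7/6 * (q * q) * (\<Sum>J\<in>{J. J \<in> JJ \<and> J \<subseteq> I (fst x) (snd x)}. r ^ card J))"
    unfolding r_def by (intro sum_mono term_bound[OF _ _ a0 bal mp]) auto
  also have "\<dots> = 7/6 * (q * q) * (\<Sum>x\<in>V \<times> V. \<Sum>J\<in>{J. J \<in> JJ \<and> J \<subseteq> I (fst x) (snd x)}. r ^ card J)"
    by (simp add: sum_distrib_left)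
  also have "(\<Sum>x\<in>V \<times> V. \<Sum>J\<in>{J. J \<in> JJ \<and> J \<subseteq> I (fst x) (snd x)}. r ^ card J)
      = (\<Sum>J\<in>JJ. \<Sum>x\<in>{x. x \<in> V \<times> V \<and> J \<subseteq> I (fst x) (snd x)}. r ^ card J)"
    by (rule sum.swap_restrict[OF finVV finite_JJ])
  also have "\<dots> = (\<Sum>J\<in>JJ. (real (card V))^2 * y ^ card J)"
  proof (intro sum.cong refl)
    fix J assume J: "J \<in> JJ"
    then have Jm: "J \<subseteq> {1..m}" unfolding JJ_def by auto
    have cJ: "card J \<le> m" using card_mono[OF _ Jm] by simp
    have "{x. x \<in> V \<times> V \<and> J \<subseteq> I (fst x) (snd x)} = {(v, w). v \<in> V \<and> w \<in> V \<and> J \<subseteq> I v w}" by auto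
    then have "(\<Sum>x\<in>{x. x \<in> V \<times> V \<and> J \<subseteq> I (fst x) (snd x)}. r ^ card J)
       = real (N ^ m * N ^ (m - card J)) * r ^ card J"
      using count_pairs[OF Jm] by simp
    also have "\<dots> = real N ^ m * (real N ^ m / real N ^ card J) * r ^ card J"
      using power_diff[of "real N" "card J" m] Np cJ by simp
    also have "\<dots> = (real (card V))^2 * y ^ card J"
      unfolding card_V y_def using Np by (simp add: field_simps power2_eq_square)
    finally show "(\<Sum>x\<in>{x. x \<in> V \<times> V \<and> J \<subseteq> I (fst x) (snd x)}. r ^ card J) = (real (card V))^2 * y ^ card J" .
  qed
  also have "\<dots> = (real (card V))^2 * (\<Sum>J\<in>JJ. y ^ card J)" by (simp add: sum_distrib_left)
  finally have 1: "measure_pmf.variance (Gnp n p) X \<le> 7/6 * (q * q) * ((real (card V))^2 * (\<Sum>J\<in>JJ. y ^ card J))" .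
  have "(\<Sum>J\<in>JJ. y ^ card J) \<le> 2 * (real m * y)^2"
    using subsets_sum[of "{1..m}" y] y0 xb unfolding JJ_def y_def r_def by simp
  then have "7/6 * (q * q) * ((real (card V))^2 * (\<Sum>J\<in>JJ. y ^ card J)) \<le> 7/6 * (q * q) * ((real (card V))^2 * (2 * (real m * y)^2))"
    by (intro mult_left_mono) (use q_pos in auto)
  with 1 have "measure_pmf.variance (Gnp n p) X \<le> 7/6 * (q * q) * ((real (card V))^2 * (2 * (real m * y)^2))"
    by linarith
  then show ?thesis unfolding y_def r_def by (simp add: power2_eq_square algebra_simps)
qed

end

theorem lemmaC1:
  fixes \<epsilon> p \<alpha> \<beta> :: real and n m :: nat and EH :: "nat set set"
  assumes eps: "0 < \<epsilon>" "\<epsilon> < 1/7"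
    and p: "0 < p" "p < 1"
    and H_graph: "EH \<subseteq> pairs {1..m}"
    and H_bal: "balanced EH {1..m}"
    and H_avg: "\<alpha> = avg_degree EH {1..m}"
    and alpha: "2 < \<alpha>" "\<alpha> < 3"
    and mdvd: "m dvd n"
    and m1: "real m \<le> sqrt (\<epsilon> / p)"
    and m2: "real m \<le> 2 powr (-1/4) * p powr (\<alpha> / 4) * sqrt (\<epsilon> * real n)"
    and beta: "0 \<le> \<beta>" "\<beta> < 1"
  shows "measure_pmf.prob (Gnp n p)
           {G. real (XH n m EH G) \<le> \<beta> * measure_pmf.expectation (Gnp n p) (\<lambda>G. real (XH n m EH G))}
         \<le> 4 * \<epsilon> / (1 - \<beta>)^2"
proof -
  have mpos: "0 < m"
  proof (rule ccontr)
    assume "\<not> 0 < m"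
    then have "m = 0" by simp
    then have "\<alpha> = 0" using H_avg unfolding avg_degree_def by simp
    then show False using alpha by simp
  qed
  have npos: "0 < n"
  proof (rule ccontr)
    assume "\<not> 0 < n"
    then have "n = 0" by simp
    then have "real m \<le> 0" using m2 by simp
    then show False using mpos by simp
  qed
  interpret LC n m EH p
    by unfold_locales (use mpos mdvd npos p H_graph in auto)
  have XX: "(\<lambda>G. real (XH n m EH G)) = X"
    by (rule ext) (simp add: X_def XH_eq)
  have a0: "0 < \<alpha>" using alpha by simp
  have bal: "2 * real (card {e\<in>EH. e \<subseteq> J}) \<le> \<alpha> * real (card J)"
    if J: "J \<subseteq> {1..m}" "J \<noteq> {}" for J
  proof -
    have cJ: "0 < real (card J)" using J finite_subset[OF J(1)] by (simp add: card_gt_0_iff)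
    have "avg_degree {e \<in> EH. e \<subseteq> J} J \<le> \<alpha>" using H_bal J H_avg unfolding balanced_def by blast
    then have "2 * real (card {e\<in>EH. e \<subseteq> J}) / real (card J) \<le> \<alpha>" unfolding avg_degree_def .
    then show ?thesis using cJ by (simp add: field_simps)
  qed
  have mm: "real m ^ 2 \<le> \<epsilon> / p"
  proof -
    have "real m ^ 2 \<le> (sqrt (\<epsilon> / p)) ^ 2" by (rule power_mono[OF m1]) simp
    also have "\<dots> = \<epsilon> / p" using eps p by simp
    finally show ?thesis .
  qed
  have mp: "real (m * m) * p \<le> 1/7"
  proof -
    have "real (m * m) * p \<le> \<epsilon>" using mm p by (simp add: field_simps power2_eq_square)
    then show ?thesis using eps by simp
  qed
  define x where "x = real m * (p powr (-\<alpha>/2) / real N)"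
  have nN: "real n = real N * real m" using n_eq by (metis of_nat_mult)
  have Nreal: "real N = real n / real m" using nN mpos by (simp add: field_simps)
  have x_eq: "x = real m ^ 2 * p powr (-\<alpha>/2) / real n"
    unfolding x_def Nreal using mpos npos by (simp add: field_simps power2_eq_square)
  have m2sq: "real m ^ 2 \<le> 2 powr (-1/2) * p powr (\<alpha>/2) * (\<epsilon> * real n)"
  proof -
    have "real m ^ 2 \<le> (2 powr (-1/4) * p powr (\<alpha> / 4) * sqrt (\<epsilon> * real n)) ^ 2"
      by (rule power_mono[OF m2]) simp
    also have "\<dots> = (2 powr (-1/4))^2 * (p powr (\<alpha> / 4))^2 * (sqrt (\<epsilon> * real n))^2"
      by (simp add: power_mult_distrib)
    also have "(2 powr (-1/4))^2 = (2::real) powr (-1/2)"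
      by (simp add: powr_power[symmetric] power2_eq_square powr_add[symmetric])
    also have "(p powr (\<alpha> / 4))^2 = p powr (\<alpha>/2)"
      using p by (simp add: power2_eq_square powr_add[symmetric])
    also have "(sqrt (\<epsilon> * real n))^2 = \<epsilon> * real n" using eps by simp
    finally show ?thesis .
  qed
  have c0: "0 \<le> (2::real) powr (-1/2)" by simp
  have c1: "(2::real) powr (-1/2) \<le> 1" using powr_mono[of "-1/2" 0 "2::real"] by simp
  have x0: "0 \<le> x" unfolding x_eq using p npos by simp
  have x_le: "x \<le> 2 powr (-1/2) * \<epsilon>"
  proof -
    have "x \<le> 2 powr (-1/2) * p powr (\<alpha>/2) * (\<epsilon> * real n) * p powr (-\<alpha>/2) / real n"
      unfolding x_eq using npos p by (intro divide_right_mono mult_right_mono m2sq) auto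
    also have "\<dots> = 2 powr (-1/2) * \<epsilon> * (p powr (\<alpha>/2) * p powr (-\<alpha>/2))"
      using npos by (simp add: field_simps)
    also have "p powr (\<alpha>/2) * p powr (-\<alpha>/2) = 1" using p by (simp add: powr_add[symmetric])
    finally show ?thesis by simp
  qed
  have "2 powr (-1/2) * \<epsilon> \<le> 1 * \<epsilon>" by (rule mult_right_mono[OF c1]) (use eps in simp)
  then have xe: "x \<le> \<epsilon>" using x_le by linarith
  have xb: "real m * (p powr (-\<alpha>/2) / real N) \<le> 1/2" using xe eps unfolding x_def by simp
  have x2: "x^2 \<le> \<epsilon>^2 / 2"
  proof -
    have "x^2 \<le> (2 powr (-1/2) * \<epsilon>)^2" by (rule power_mono[OF x_le x0])
    also have "\<dots> = (2 powr (-1/2))^2 * \<epsilon>^2" by (simp add: power_mult_distrib)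
    also have "(2 powr (-1/2))^2 = (2::real) powr (-1)"
      by (simp add: power2_eq_square powr_add[symmetric])
    also have "(2::real) powr (-1) = 1/2" by (simp add: powr_minus)
    finally show ?thesis by simp
  qed
  have Var: "measure_pmf.variance (Gnp n p) X \<le> 7/3 * (real (card V) * q)^2 * x^2"
    unfolding x_def by (rule var_bound[OF a0 bal mp xb])
  define \<mu> where "\<mu> = measure_pmf.expectation (Gnp n p) X"
  have mu: "\<mu> = real (card V) * q" unfolding \<mu>_def by (rule EX)
  have cV: "0 < real (card V)" using card_V N_pos by simp
  have mu0: "0 < \<mu>" unfolding mu using cV q_pos by simp
  define a where "a = (1 - \<beta>) * \<mu>"
  have a0': "0 < a" unfolding a_def using beta mu0 by simp
  have "measure_pmf.prob (Gnp n p) {G. X G \<le> \<beta> * \<mu>}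
      \<le> measure_pmf.prob (Gnp n p) {G \<in> space (measure_pmf (Gnp n p)). a \<le> \<bar>X G - \<mu>\<bar>}"
    by (intro measure_pmf.finite_measure_mono) (auto simp: a_def algebra_simps)
  also have "\<dots> \<le> measure_pmf.variance (Gnp n p) X / a^2"
    unfolding \<mu>_def by (rule measure_pmf.Chebyshev_inequality) (use a0' integrable_Gnp in auto)
  also have "\<dots> \<le> 7/3 * \<mu>^2 * x^2 / a^2"
    using Var mu by (intro divide_right_mono) auto
  also have "\<dots> = 7/3 * x^2 / (1 - \<beta>)^2"
  proof -
    have "7/3 * \<mu>^2 * x^2 / a^2 = (7/3 * x^2) * \<mu>^2 / ((1 - \<beta>)^2 * \<mu>^2)"
      unfolding a_def by (simp add: power_mult_distrib mult_ac)
    also have "\<dots> = 7/3 * x^2 / (1 - \<beta>)^2" using mu0 by (rule_tac mult_divide_mult_cancel_right) simp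
    finally show ?thesis .
  qed
  also have "\<dots> \<le> 4 * \<epsilon> / (1 - \<beta>)^2"
  proof (intro divide_right_mono)
    have "7/3 * x^2 \<le> 7/3 * (\<epsilon>^2 / 2)" using x2 by simp
    also have "\<dots> \<le> 4 * \<epsilon>" using eps by (simp add: power2_eq_square field_simps)
    finally show "7/3 * x^2 \<le> 4 * \<epsilon>" .
  qed simp
  finally have fin: "measure_pmf.prob (Gnp n p) {G. X G \<le> \<beta> * \<mu>} \<le> 4 * \<epsilon> / (1 - \<beta>)^2" .
  have XX2: "\<And>G. real (XH n m EH G) = X G" by (simp add: X_def XH_eq)
  show ?thesis unfolding XX XX2 using fin unfolding \<mu>_def .
qed

end
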